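(* Let $k\ge2$, let $G$ be a countably infinite one-way $k$-locally finite graph, and let $H$ be a countable graph with a partition $\{U_1,\dots,U_k\}$ of $V(H)$ into infinite sets such that for every $i\in[k]$ and every finite $W\subseteq U_1\cup\dots\cup U_{i-1}$, the set of vertices in $U_i$ adjacent to every vertex of $W$ is infinite. Then there is an embedding $f$ of $G$ into $H$ (an injective map $V(G)\to V(H)$ sending edges to edges) with $U_1\subseteq f(V(G))$.
   Context: A graph $G$ is one-way $k$-locally finite ($k\ge2$) if there is a partition of $V(G)$ into $k$ independent sets $V_1,\dots,V_k$ with $|V_1|\geq\dots\geq|V_k|$ such that for all $1\le i<j\le k$ and all $v\in V_j$, $v$ has only finitely many neighbors in $V_i$. *)

theory Defs
  imports Main "HOL-Library.Countable_Set"
begin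

definition simple_graph :: "'a set \<Rightarrow> ('a \<Rightarrow> 'a \<Rightarrow> bool) \<Rightarrow> bool" where
  "simple_graph V E \<longleftrightarrow>
     (\<forall>u v. E u v \<longrightarrow> E v u) \<and> (\<forall>v. \<not> E v v) \<and> (\<forall>u v. E u v \<longrightarrow> u \<in> V \<and> v \<in> V)"

definition card_leq :: "'b set \<Rightarrow> 'c set \<Rightarrow> bool" where
  "card_leq B A \<longleftrightarrow> (\<exists>f. inj_on f B \<and> f ` B \<subseteq> A)"

definition is_partition :: "'a set \<Rightarrow> nat \<Rightarrow> (nat \<Rightarrow> 'a set) \<Rightarrow> bool" where
  "is_partition V k P \<longleftrightarrow>
     (\<Union>i\<in>{1..k}. P i) = V \<and> (\<forall>i\<in>{1..k}. \<forall>j\<in>{1..k}. i \<noteq> j \<longrightarrow> P i \<inter> P j = {})"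

definition independent_set :: "('a \<Rightarrow> 'a \<Rightarrow> bool) \<Rightarrow> 'a set \<Rightarrow> bool" where
  "independent_set E S \<longleftrightarrow> (\<forall>u\<in>S. \<forall>v\<in>S. \<not> E u v)"

definition one_way_locally_finite :: "nat \<Rightarrow> 'a set \<Rightarrow> ('a \<Rightarrow> 'a \<Rightarrow> bool) \<Rightarrow> bool" where
  "one_way_locally_finite k V E \<longleftrightarrow> k \<ge> 2 \<and>
     (\<exists>P. is_partition V k P \<and> (\<forall>i\<in>{1..k}. independent_set E (P i)) \<and>
          (\<forall>i j. 1 \<le> i \<and> i \<le> j \<and> j \<le> k \<longrightarrow> card_leq (P j) (P i)) \<and>
          (\<forall>i j. 1 \<le> i \<and> i < j \<and> j \<le> k \<longrightarrow>
              (\<forall>v\<in>P j. finite {u\<in>P i. E v u})))"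

definition graph_embedding ::
  "'a set \<Rightarrow> ('a \<Rightarrow> 'a \<Rightarrow> bool) \<Rightarrow> 'b set \<Rightarrow> ('b \<Rightarrow> 'b \<Rightarrow> bool) \<Rightarrow> ('a \<Rightarrow> 'b) \<Rightarrow> bool" where
  "graph_embedding VG EG VH EH f \<longleftrightarrow>
     inj_on f VG \<and> f ` VG \<subseteq> VH \<and> (\<forall>u\<in>VG. \<forall>v\<in>VG. EG u v \<longrightarrow> EH (f u) (f v))"

end

theory Submission
  imports Defs
begin

locale emb_setup =
  fixes k :: nat and VG :: "'a set" and EG :: "'a \<Rightarrow> 'a \<Rightarrow> bool"
    and VH :: "'b set" and EH :: "'b \<Rightarrow> 'b \<Rightarrow> bool"
    and U :: "nat \<Rightarrow> 'b set" and P :: "nat \<Rightarrow> 'a set"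
  assumes cVG: "countable VG" and neVG: "VG \<noteq> {}" and cU1: "countable (U 1)"
  and k1: "1 \<le> k" and sgG: "simple_graph VG EG"
  and sgH: "simple_graph VH EH"
  and partG: "is_partition VG k P"
  and indep: "\<forall>i\<in>{1..k}. independent_set EG (P i)"
  and lowfin: "\<forall>i j. 1 \<le> i \<and> i < j \<and> j \<le> k \<longrightarrow> (\<forall>v\<in>P j. finite {u\<in>P i. EG v u})"
  and P1inf: "infinite (P 1)"
  and partH: "is_partition VH k U"
  and Uinf: "\<forall>i\<in>{1..k}. infinite (U i)"
  and Hcond: "\<forall>i\<in>{1..k}. \<forall>W. finite W \<and> W \<subseteq> (\<Union>j\<in>{1..<i}. U j) \<longrightarrow>
            infinite {u \<in> U i. \<forall>w\<in>W. EH u w}"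
begin

definition good :: "'a set \<Rightarrow> ('a \<Rightarrow> 'b) \<Rightarrow> bool" where
  "good D g \<longleftrightarrow> finite D \<and> D \<subseteq> VG \<and> inj_on g D \<and>
     (\<forall>i\<in>{1..k}. \<forall>v\<in>D \<inter> P i. g v \<in> U i) \<and>
     (\<forall>i j. 1 \<le> i \<and> i < j \<and> j \<le> k \<longrightarrow> (\<forall>v\<in>D \<inter> P j. \<forall>u\<in>P i. EG v u \<longrightarrow> u \<in> D)) \<and>
     (\<forall>u\<in>D. \<forall>v\<in>D. EG u v \<longrightarrow> EH (g u) (g v))"

definition ext :: "'a set \<Rightarrow> ('a \<Rightarrow> 'b) \<Rightarrow> 'a set \<Rightarrow> ('a \<Rightarrow> 'b) \<Rightarrow> bool" where
  "ext D g D' g' \<longleftrightarrow> D \<subseteq> D' \<and> (\<forall>v\<in>D. g' v = g v)"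

lemma ext_refl: "ext D g D g" by (simp add: ext_def)
lemma ext_trans: "ext D g D1 g1 \<Longrightarrow> ext D1 g1 D2 g2 \<Longrightarrow> ext D g D2 g2"
  by (auto simp: ext_def)

lemma cls_unique: "v \<in> P i \<Longrightarrow> v \<in> P j \<Longrightarrow> i \<in> {1..k} \<Longrightarrow> j \<in> {1..k} \<Longrightarrow> i = j"
  using partG unfolding is_partition_def by blast

lemma cls_ex: "v \<in> VG \<Longrightarrow> \<exists>i\<in>{1..k}. v \<in> P i"
  using partG unfolding is_partition_def by blast

lemma P_sub: "i \<in> {1..k} \<Longrightarrow> P i \<subseteq> VG"
  using partG unfolding is_partition_def by blast

lemma U_sub: "i \<in> {1..k} \<Longrightarrow> U i \<subseteq> VH"
  using partH unfolding is_partition_def by blast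

lemma EG_sym: "EG u v \<Longrightarrow> EG v u" using sgG unfolding simple_graph_def by blast
lemma EG_irr: "\<not> EG v v" using sgG unfolding simple_graph_def by blast
lemma EG_in: "EG u v \<Longrightarrow> u \<in> VG \<and> v \<in> VG" using sgG unfolding simple_graph_def by blast
lemma EH_sym: "EH u v \<Longrightarrow> EH v u" using sgH unfolding simple_graph_def by blast

lemma good_empty: "good {} g" by (simp add: good_def)

lemma add_vertex:
  "j \<in> {1..k} \<Longrightarrow> good D g \<Longrightarrow> v \<in> P j \<Longrightarrow> \<exists>D' g'. good D' g' \<and> ext D g D' g' \<and> v \<in> D'"
proof (induction j arbitrary: D g v rule: less_induct)
  case (less j)
  have setadd: "finite S \<Longrightarrow> (\<forall>u\<in>S. \<exists>i\<in>{1..<j}. u \<in> P i) \<Longrightarrow> good D0 g0 \<Longrightarrow>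
      \<exists>D' g'. good D' g' \<and> ext D0 g0 D' g' \<and> S \<subseteq> D'" for S D0 g0
  proof (induction S arbitrary: D0 g0 rule: finite_induct)
    case empty then show ?case using ext_refl by blast
  next
    case (insert x S)
    have "\<forall>u\<in>S. \<exists>i\<in>{1..<j}. u \<in> P i" using insert.prems(1) by auto
    from insert.IH[OF this insert.prems(2)]
    obtain D1 g1 where 1: "good D1 g1" "ext D0 g0 D1 g1" "S \<subseteq> D1" by blast
    from insert.prems obtain i where i: "i \<in> {1..<j}" "x \<in> P i" by auto
    have "i \<in> {1..k}" "i < j" using i less.prems(1) by auto
    from less.IH[OF \<open>i<j\<close> this(1) 1(1) i(2)] obtain D2 g2 where
      "good D2 g2" "ext D1 g1 D2 g2" "x \<in> D2" by blast
    then show ?case using 1 ext_trans[of D0 g0 D1 g1 D2 g2] unfolding ext_def by blast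
  qed
  define N where "N = {u. \<exists>i\<in>{1..<j}. u \<in> P i \<and> EG v u}"
  have "N = (\<Union>i\<in>{1..<j}. {u\<in>P i. EG v u})" unfolding N_def by auto
  moreover have "finite {u\<in>P i. EG v u}" if "i\<in>{1..<j}" for i
    using lowfin less.prems that by auto
  ultimately have finN: "finite N" by simp
  have "\<forall>u\<in>N. \<exists>i\<in>{1..<j}. u \<in> P i" unfolding N_def by blast
  from setadd[OF finN this less.prems(2)] obtain D1 g1 where
    1: "good D1 g1" "ext D g D1 g1" "N \<subseteq> D1" by blast
  show ?case
  proof (cases "v \<in> D1")
    case True then show ?thesis using 1 by blast
  next
    case False
    let ?W = "g1 ` N"
    have Wsub: "?W \<subseteq> (\<Union>i\<in>{1..<j}. U i)"
    proof
      fix w assume "w \<in> ?W"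
      then obtain u where u: "u \<in> N" "w = g1 u" by auto
      then obtain i where i: "i \<in> {1..<j}" "u \<in> P i" unfolding N_def by auto
      have "i \<in> {1..k}" using i less.prems(1) by auto
      have "u \<in> D1" using 1(3) u by blast
      then have "g1 u \<in> U i" using 1(1) \<open>i \<in> {1..k}\<close> i unfolding good_def by blast
      then show "w \<in> (\<Union>i\<in>{1..<j}. U i)" using u i by auto
    qed
    have "infinite {u \<in> U j. \<forall>w\<in>?W. EH u w}"
      using Hcond less.prems(1) Wsub finN by blast
    then have "infinite ({u \<in> U j. \<forall>w\<in>?W. EH u w} - g1 ` D1)"
      using 1(1) unfolding good_def by (meson Diff_infinite_finite finite_imageI)
    then obtain h0 where "h0 \<in> {u \<in> U j. \<forall>w\<in>?W. EH u w} - g1 ` D1"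
      using infinite_imp_nonempty by blast
    then obtain h where h: "h \<in> U j" "\<forall>w\<in>?W. EH h w" "h \<notin> g1 ` D1" by blast
    define D' where "D' = insert v D1"
    define g' where "g' = g1(v := h)"
    have g1good: "finite D1" "D1 \<subseteq> VG" "inj_on g1 D1"
      "\<forall>i\<in>{1..k}. \<forall>x\<in>D1 \<inter> P i. g1 x \<in> U i"
      "\<forall>i j. 1 \<le> i \<and> i < j \<and> j \<le> k \<longrightarrow> (\<forall>x\<in>D1 \<inter> P j. \<forall>u\<in>P i. EG x u \<longrightarrow> u \<in> D1)"
      "\<forall>u\<in>D1. \<forall>x\<in>D1. EG u x \<longrightarrow> EH (g1 u) (g1 x)"
      using 1(1) unfolding good_def by auto
    have vVG: "v \<in> VG" using P_sub less.prems by blast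
    have edge_v: "EH h (g1 y)" if yy: "y \<in> D1" "EG v y" for y
    proof -
      obtain i where i: "i \<in> {1..k}" "y \<in> P i" using cls_ex g1good(2) yy by blast
      consider "i < j" | "i = j" | "j < i" by linarith
      then show ?thesis
      proof cases
        case 1 then have "y \<in> N" unfolding N_def using i yy by auto
        then show ?thesis using h by auto
      next
        case 2 then show ?thesis using indep i yy less.prems unfolding independent_set_def by blast
      next
        case 3
        have "v \<in> D1" using g1good(5) i 3 yy less.prems EG_sym by (auto 0 3)
        then show ?thesis using False by blast
      qed
    qed
    have "good D' g'"
      unfolding good_def
    proof (intro conjI)
      show "finite D'" using g1good D'_def by auto
      show "D' \<subseteq> VG" using g1good vVG D'_def by auto
      show "inj_on g' D'" using g1good(3) h(3) False unfolding D'_def g'_def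
        by (auto simp: inj_on_def)
      show "\<forall>i\<in>{1..k}. \<forall>x\<in>D' \<inter> P i. g' x \<in> U i"
      proof (intro ballI)
      fix i x assume a: "i \<in> {1..k}" "x \<in> D' \<inter> P i"
      show "g' x \<in> U i"
      proof (cases "x = v")
        case True
        then have "i = j" using cls_unique[of v i j] a less.prems by auto
        then show ?thesis using True h(1) g'_def by auto
      next
        case False then show ?thesis using a g1good(4) D'_def g'_def by auto
      qed
    qed
      show "\<forall>i ja. 1 \<le> i \<and> i < ja \<and> ja \<le> k \<longrightarrow> (\<forall>x\<in>D' \<inter> P ja. \<forall>u\<in>P i. EG x u \<longrightarrow> u \<in> D')"
      proof (intro allI impI ballI)
        fix i ja x u assume a: "1 \<le> i \<and> i < ja \<and> ja \<le> k" "x \<in> D' \<inter> P ja" "u \<in> P i" "EG x u"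
        show "u \<in> D'"
        proof (cases "x = v")
          case True
          then have "ja = j" using cls_unique a less.prems by auto
          then have "u \<in> N" unfolding N_def using a True by auto
          then show ?thesis using 1(3) D'_def by auto
        next
          case False then show ?thesis using a g1good(5) D'_def by auto
        qed
      qed
      show "\<forall>u\<in>D'. \<forall>x\<in>D'. EG u x \<longrightarrow> EH (g' u) (g' x)"
      proof (intro ballI impI)
        fix a b assume ab: "a \<in> D'" "b \<in> D'" "EG a b"
        show "EH (g' a) (g' b)"
        proof (cases "a = v")
          case True
          then have "b \<noteq> v" using ab EG_irr by auto
          then show ?thesis using True ab edge_v D'_def g'_def by auto
        next
          case af: False
          show ?thesis
          proof (cases "b = v")
            case True
            then have "a \<in> D1" using af ab D'_def by auto
            then show ?thesis using True ab edge_v[of a] EG_sym EH_sym af g'_def by auto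
          next
            case False
            then show ?thesis using af ab g1good(6) D'_def g'_def by auto
          qed
        qed
      qed
    qed
    moreover have "ext D1 g1 D' g'" using False unfolding ext_def D'_def g'_def by auto
    ultimately show ?thesis using 1(2) ext_trans D'_def by blast
  qed
qed

lemma add_image:
  assumes "good D g" "h \<in> U 1"
  shows "\<exists>D' g'. good D' g' \<and> ext D g D' g' \<and> h \<in> g' ` D'"
proof (cases "h \<in> g ` D")
  case True then show ?thesis using assms ext_refl by blast
next
  case False
  have gg: "finite D" "D \<subseteq> VG" "inj_on g D"
      "\<forall>i\<in>{1..k}. \<forall>x\<in>D \<inter> P i. g x \<in> U i"
      "\<forall>i j. 1 \<le> i \<and> i < j \<and> j \<le> k \<longrightarrow> (\<forall>x\<in>D \<inter> P j. \<forall>u\<in>P i. EG x u \<longrightarrow> u \<in> D)"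
      "\<forall>u\<in>D. \<forall>x\<in>D. EG u x \<longrightarrow> EH (g u) (g x)"
    using assms(1) unfolding good_def by auto
  have "infinite (P 1 - D)" using P1inf gg(1) by auto
  then obtain v where v: "v \<in> P 1" "v \<notin> D"
    by (metis Diff_iff finite.emptyI ex_in_conv)
  have vVG: "v \<in> VG" using P_sub v k1 by auto
  have nb: "\<not> EG v y" if yy: "y \<in> D" for y
  proof
    assume e: "EG v y"
    obtain i where i: "i \<in> {1..k}" "y \<in> P i" using cls_ex gg(2) yy by blast
    show False
    proof (cases "i = 1")
      case True
      have "independent_set EG (P 1)" using indep k1 by auto
      then show False using True i v e unfolding independent_set_def by auto
    next
      case f: False
      have "EG y v" using e EG_sym by blast
      moreover have "1 < i" using f i by auto
      ultimately have "v \<in> D" using gg(5)[rule_format, of 1 i y v] i yy v by auto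
      then show False using v by blast
    qed
  qed
  define D' where "D' = insert v D"
  define g' where "g' = g(v := h)"
  have "good D' g'" unfolding good_def
  proof (intro conjI)
    show "finite D'" using gg D'_def by auto
    show "D' \<subseteq> VG" using gg vVG D'_def by auto
    show "inj_on g' D'" using gg(3) False v unfolding D'_def g'_def by (auto simp: inj_on_def)
    show "\<forall>i\<in>{1..k}. \<forall>x\<in>D' \<inter> P i. g' x \<in> U i"
    proof (intro ballI)
      fix i x assume a: "i \<in> {1..k}" "x \<in> D' \<inter> P i"
      show "g' x \<in> U i"
      proof (cases "x = v")
        case True
        then have "i = 1" using cls_unique[of v i 1] a v k1 by auto
        then show ?thesis using True assms(2) g'_def by auto
      next
        case False then show ?thesis using a gg(4) D'_def g'_def by auto
      qed
    qed
    show "\<forall>i j. 1 \<le> i \<and> i < j \<and> j \<le> k \<longrightarrow> (\<forall>x\<in>D' \<inter> P j. \<forall>u\<in>P i. EG x u \<longrightarrow> u \<in> D')"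
    proof (intro allI impI ballI)
      fix i ja x u assume a: "1 \<le> i \<and> i < ja \<and> ja \<le> k" "x \<in> D' \<inter> P ja" "u \<in> P i" "EG x u"
      show "u \<in> D'"
      proof (cases "x = v")
        case True
        then have "ja = 1" using cls_unique[of v ja 1] a v k1 by auto
        then show ?thesis using a by auto
      next
        case False then show ?thesis using a gg(5) D'_def by auto
      qed
    qed
    show "\<forall>u\<in>D'. \<forall>x\<in>D'. EG u x \<longrightarrow> EH (g' u) (g' x)"
    proof (intro ballI impI)
      fix a b assume ab: "a \<in> D'" "b \<in> D'" "EG a b"
      show "EH (g' a) (g' b)"
      proof (cases "a = v \<or> b = v")
        case True
        then show ?thesis
        proof
          assume "a = v"
          then have "b \<in> D" using ab EG_irr D'_def by auto
          then show ?thesis using nb \<open>a = v\<close> ab by blast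
        next
          assume "b = v"
          then have "a \<in> D" using ab EG_irr D'_def by auto
          then show ?thesis using nb \<open>b = v\<close> ab EG_sym by blast
        qed
      next
        case False
        then show ?thesis using ab gg(6) D'_def g'_def by auto
      qed
    qed
  qed
  moreover have "ext D g D' g'" using v unfolding ext_def D'_def g'_def by auto
  moreover have "h \<in> g' ` D'" unfolding D'_def g'_def by auto
  ultimately show ?thesis by blast
qed


lemma step_ex:
  assumes "good D g"
  shows "\<exists>D' g'. good D' g' \<and> ext D g D' g' \<and> from_nat_into VG n \<in> D' \<and> from_nat_into (U 1) n \<in> g' ` D'"
proof -
  have x: "from_nat_into VG n \<in> VG" using neVG by (rule from_nat_into)
  obtain j where j: "j \<in> {1..k}" "from_nat_into VG n \<in> P j" using cls_ex[OF x] by blast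
  obtain D1 g1 where 1: "good D1 g1" "ext D g D1 g1" "from_nat_into VG n \<in> D1"
    using add_vertex[OF j(1) assms j(2)] by blast
  have "infinite (U 1)" using Uinf k1 by auto
  then have "U 1 \<noteq> {}" by auto
  then have h: "from_nat_into (U 1) n \<in> U 1" by (rule from_nat_into)
  obtain D2 g2 where 2: "good D2 g2" "ext D1 g1 D2 g2" "from_nat_into (U 1) n \<in> g2 ` D2"
    using add_image[OF 1(1) h] by blast
  show ?thesis using 1 2 ext_trans[OF 1(2) 2(2)] unfolding ext_def by blast
qed

definition stepf :: "nat \<Rightarrow> 'a set \<times> ('a \<Rightarrow> 'b) \<Rightarrow> 'a set \<times> ('a \<Rightarrow> 'b)" where
  "stepf n st = (SOME st'. good (fst st') (snd st') \<and> ext (fst st) (snd st) (fst st') (snd st')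
      \<and> from_nat_into VG n \<in> fst st' \<and> from_nat_into (U 1) n \<in> snd st' ` fst st')"

fun seq :: "nat \<Rightarrow> 'a set \<times> ('a \<Rightarrow> 'b)" where
  "seq 0 = ({}, \<lambda>_. undefined)"
| "seq (Suc n) = stepf n (seq n)"

lemma seq_props:
  "good (fst (seq n)) (snd (seq n)) \<and>
   (good (fst (seq n)) (snd (seq n)) \<longrightarrow>
     ext (fst (seq n)) (snd (seq n)) (fst (seq (Suc n))) (snd (seq (Suc n)))
      \<and> from_nat_into VG n \<in> fst (seq (Suc n)) \<and> from_nat_into (U 1) n \<in> snd (seq (Suc n)) ` fst (seq (Suc n))
      \<and> good (fst (seq (Suc n))) (snd (seq (Suc n))))"
proof (induction n)
  case 0
  have g: "good (fst (seq 0)) (snd (seq 0))" by (simp add: good_empty)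
  from step_ex[OF g, of 0] have "\<exists>st'. good (fst st') (snd st') \<and> ext (fst (seq 0)) (snd (seq 0)) (fst st') (snd st')
      \<and> from_nat_into VG 0 \<in> fst st' \<and> from_nat_into (U 1) 0 \<in> snd st' ` fst st'" by auto
  from someI_ex[OF this] show ?case using g by (simp add: stepf_def)
next
  case (Suc n)
  then have g: "good (fst (seq (Suc n))) (snd (seq (Suc n)))" by blast
  from step_ex[OF g, of "Suc n"] have "\<exists>st'. good (fst st') (snd st') \<and> ext (fst (seq (Suc n))) (snd (seq (Suc n))) (fst st') (snd st')
      \<and> from_nat_into VG (Suc n) \<in> fst st' \<and> from_nat_into (U 1) (Suc n) \<in> snd st' ` fst st'" by auto
  from someI_ex[OF this] show ?case using g by (simp only: seq.simps(2) stepf_def) blast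
qed

lemma seq_good: "good (fst (seq n)) (snd (seq n))" using seq_props by blast
lemma seq_step: "ext (fst (seq n)) (snd (seq n)) (fst (seq (Suc n))) (snd (seq (Suc n)))"
  "from_nat_into VG n \<in> fst (seq (Suc n))" "from_nat_into (U 1) n \<in> snd (seq (Suc n)) ` fst (seq (Suc n))"
  using seq_props seq_good by blast+

lemma seq_mono: "m \<le> n \<Longrightarrow> ext (fst (seq m)) (snd (seq m)) (fst (seq n)) (snd (seq n))"
proof (induction n)
  case 0 then show ?case by (simp add: ext_refl)
next
  case (Suc n)
  show ?case
  proof (cases "m = Suc n")
    case True then show ?thesis by (simp add: ext_refl)
  next
    case False then have "m \<le> n" using Suc by auto
    then show ?thesis using Suc.IH ext_trans seq_step(1) by blast
  qed
qed

lemma final: "\<exists>f. graph_embedding VG EG VH EH f \<and> U 1 \<subseteq> f ` VG"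
proof -
  define f where "f v = snd (seq (LEAST n. v \<in> fst (seq n))) v" for v
  have fv: "f v = snd (seq n) v" if "v \<in> fst (seq n)" for v n
  proof -
    let ?m = "LEAST n. v \<in> fst (seq n)"
    have "?m \<le> n" using that by (rule Least_le)
    moreover have "v \<in> fst (seq ?m)" using that by (rule LeastI)
    ultimately show ?thesis using seq_mono unfolding f_def ext_def by metis
  qed
  have inD: "\<exists>n. v \<in> fst (seq n)" if vv: "v \<in> VG" for v
  proof -
    obtain n where "v = from_nat_into VG n" using from_nat_into_surj[OF cVG vv] by metis
    then show ?thesis using seq_step(2) by blast
  qed
  have inD2: "\<exists>n. u \<in> fst (seq n) \<and> v \<in> fst (seq n)" if uv: "u \<in> VG" "v \<in> VG" for u v
  proof -
    obtain a b where a: "u \<in> fst (seq a)" "v \<in> fst (seq b)" using inD uv by blast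
    have "u \<in> fst (seq (max a b))" "v \<in> fst (seq (max a b))"
      using a seq_mono[of a "max a b"] seq_mono[of b "max a b"] unfolding ext_def by auto
    then show ?thesis by blast
  qed
  have "graph_embedding VG EG VH EH f" unfolding graph_embedding_def
  proof (intro conjI)
    show "inj_on f VG"
    proof (rule inj_onI)
      fix u v assume uv: "u \<in> VG" "v \<in> VG" "f u = f v"
      obtain n where n: "u \<in> fst (seq n)" "v \<in> fst (seq n)" using inD2 uv by blast
      have "inj_on (snd (seq n)) (fst (seq n))" using seq_good unfolding good_def by blast
      then show "u = v" using n uv fv by (metis inj_onD)
    qed
    show "f ` VG \<subseteq> VH"
    proof
      fix y assume "y \<in> f ` VG"
      then obtain v where v: "v \<in> VG" "y = f v" by blast
      obtain n where n: "v \<in> fst (seq n)" using inD v by blast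
      obtain i where i: "i \<in> {1..k}" "v \<in> P i" using cls_ex v by blast
      have "snd (seq n) v \<in> U i" using seq_good[of n] n i unfolding good_def by blast
      then show "y \<in> VH" using U_sub i v fv n by auto
    qed
    show "\<forall>u\<in>VG. \<forall>v\<in>VG. EG u v \<longrightarrow> EH (f u) (f v)"
    proof (intro ballI impI)
      fix u v assume uv: "u \<in> VG" "v \<in> VG" "EG u v"
      obtain n where n: "u \<in> fst (seq n)" "v \<in> fst (seq n)" using inD2 uv by blast
      have "EH (snd (seq n) u) (snd (seq n) v)" using seq_good[of n] n uv unfolding good_def by blast
      then show "EH (f u) (f v)" using fv n by simp
    qed
  qed
  moreover have "U 1 \<subseteq> f ` VG"
  proof
    fix h assume h: "h \<in> U 1"
    obtain n where "h = from_nat_into (U 1) n" using from_nat_into_surj[OF cU1 h] by metis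
    then obtain v where v: "v \<in> fst (seq (Suc n))" "h = snd (seq (Suc n)) v" using seq_step(3) by blast
    have "v \<in> VG" using seq_good[of "Suc n"] v unfolding good_def by blast
    moreover have "f v = h" using fv[OF v(1)] v(2) by simp
    ultimately show "h \<in> f ` VG" by blast
  qed
  ultimately show ?thesis by blast
qed

end

theorem mainTheorem19:
  fixes k :: nat
    and VG :: "'a set" and EG :: "'a \<Rightarrow> 'a \<Rightarrow> bool"
    and VH :: "'b set" and EH :: "'b \<Rightarrow> 'b \<Rightarrow> bool"
    and U :: "nat \<Rightarrow> 'b set"
  assumes "k \<ge> 2"
    and "simple_graph VG EG" and "countable VG" and "infinite VG"
    and "one_way_locally_finite k VG EG"
    and "simple_graph VH EH" and "countable VH"
    and "is_partition VH k U"
    and "\<forall>i\<in>{1..k}. infinite (U i)"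
    and "\<forall>i\<in>{1..k}. \<forall>W. finite W \<and> W \<subseteq> (\<Union>j\<in>{1..<i}. U j) \<longrightarrow>
            infinite {u \<in> U i. \<forall>w\<in>W. EH u w}"
  shows "\<exists>f. graph_embedding VG EG VH EH f \<and> U 1 \<subseteq> f ` VG"
proof -
  obtain P where P: "is_partition VG k P" "\<forall>i\<in>{1..k}. independent_set EG (P i)"
    "\<forall>i j. 1 \<le> i \<and> i \<le> j \<and> j \<le> k \<longrightarrow> card_leq (P j) (P i)"
    "\<forall>i j. 1 \<le> i \<and> i < j \<and> j \<le> k \<longrightarrow> (\<forall>v\<in>P j. finite {u\<in>P i. EG v u})"
    using assms(5) unfolding one_way_locally_finite_def by blast
  have "\<exists>i\<in>{1..k}. infinite (P i)"
  proof (rule ccontr)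
    assume "\<not> ?thesis"
    then have "\<forall>x\<in>{1..k}. finite (P x)" by auto
    then have fin: "finite (\<Union>i\<in>{1..k}. P i)" by (intro finite_UN_I) auto
    have "(\<Union>i\<in>{1..k}. P i) = VG" using P(1) unfolding is_partition_def by blast
    then show False using fin assms(4) by metis
  qed
  then obtain i where i: "i \<in> {1..k}" "infinite (P i)" by blast
  have "card_leq (P i) (P 1)" using P(3) i(1) by auto
  then obtain g where g: "inj_on g (P i)" "g ` P i \<subseteq> P 1" unfolding card_leq_def by blast
  have P1: "infinite (P 1)"
  proof
    assume "finite (P 1)"
    then have "finite (g ` P i)" using g(2) finite_subset by blast
    then show False using g(1) i(2) finite_imageD by blast
  qed
  have U1sub: "U 1 \<subseteq> VH" using assms(1,8) unfolding is_partition_def by auto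
  interpret emb_setup k VG EG VH EH U P
  proof
    show "countable VG" by fact
    show "VG \<noteq> {}" using assms(4) by auto
    show "countable (U 1)" using assms(7) U1sub countable_subset by blast
    show "1 \<le> k" using assms(1) by simp
  qed (use assms P P1 in auto)
  show ?thesis by (rule final)
qed

end
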